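(* Let $\gamma>0$ and assume the minimum norm solution $\mathbf{u}^*=\mathbf{A}^\dagger\mathbf{b}$ satisfies $\mathbf{L}\mathbf{u}^*=\mathbf{g}$. Let $\tilde{\mathbf{b}}\in\mathbb{R}^m$ and let $\tilde{\mathbf{u}}^*_\gamma$ be a solution of $$\big((\mathbf{I}+\gamma\mathbf{A}^t\mathbf{A})\mathbf{A}^t\mathbf{A}+\gamma\mathbf{L}^t\mathbf{L}\big)\tilde{\mathbf{u}}^*_\gamma=(\mathbf{I}+\gamma\mathbf{A}^t\mathbf{A})\mathbf{A}^t\tilde{\mathbf{b}}+\gamma\mathbf{L}^t\mathbf{g},$$ and assume the same system with $\tilde{\mathbf{b}}$ replaced by $\mathbf{b}$ has a unique solution. Then $$\|\mathbf{A}\mathbf{u}^*-\mathbf{A}\tilde{\mathbf{u}}^*_\gamma\|_m\le\|(\mathbf{I}+\gamma\mathbf{A}\mathbf{A}^t)(\mathbf{b}-\tilde{\mathbf{b}})\|_m.$$ Moreover, if $m\ge n$ and $\mathbf{A}$ has full column rank $n$, then $$\|\mathbf{u}^*-\tilde{\mathbf{u}}^*_\gamma\|_n\le\frac{1}{\sqrt{\lambda_n}}\|(\mathbf{I}+\gamma\mathbf{A}\mathbf{A}^t)(\mathbf{b}-\tilde{\mathbf{b}})\|_m,$$ where $\lambda_n>0$ is the smallest eigenvalue of $\mathbf{A}^t\mathbf{A}$.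
   Context: $\mathbf{A}\in\mathbb{R}^{m\times n}$, $\mathbf{b}\in\mathbb{R}^m$, $\mathbf{L}\in\mathbb{R}^{p\times n}$, $\mathbf{g}\in\mathbb{R}^p$; $\mathbf{A}^\dagger$ is the Moore–Penrose pseudoinverse; $\|\cdot\|_m,\|\cdot\|_n$ are Euclidean norms; $\mathbf{I}$ denotes identity matrices of appropriate sizes. *)

theory Defs
  imports "HOL-Analysis.Analysis"
begin

definition penrose :: "real^'n^'m \<Rightarrow> real^'m^'n \<Rightarrow> bool" where
  "penrose A X \<longleftrightarrow> A ** X ** A = A \<and> X ** A ** X = X \<and>
     transpose (A ** X) = A ** X \<and> transpose (X ** A) = X ** A"

definition pinv :: "real^'n^'m \<Rightarrow> real^'m^'n" where
  "pinv A = (THE X. penrose A X)"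

definition eigenvalues :: "real^'n^'n \<Rightarrow> real set" where
  "eigenvalues M = {c. \<exists>v. v \<noteq> 0 \<and> M *v v = c *\<^sub>R v}"

definition smallest_eigenvalue :: "real^'n^'n \<Rightarrow> real" where
  "smallest_eigenvalue M = Min (eigenvalues M)"

end

theory Submission
  imports Defs
begin
declare transpose_matrix_vector[simp del]
lemma inner_transpose: fixes A :: "real^'n^'m"
  shows "x \<bullet> (transpose A *v y) = (A *v x) \<bullet> y"
  by (metis dot_lmul_matrix transpose_matrix_vector inner_commute)

lemma normsq_A: fixes A :: "real^'n^'m"
  shows "x \<bullet> (transpose A *v (A *v x)) = norm (A *v x) ^ 2"
  by (simp add: inner_transpose power2_norm_eq_inner)

definition rs :: "real^'n^'m \<Rightarrow> (real^'n) set" where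
  "rs A = range (\<lambda>z. transpose A *v z)"
lemma rs_subspace: "subspace (rs A)"
  unfolding rs_def by (simp add: subspace_UNIV linear_subspace_image)

lemma rs_unique: fixes A :: "real^'n^'m"
  assumes "x \<in> rs A" "y \<in> rs A" "transpose A *v (A *v x) = transpose A *v (A *v y)"
  shows "x = y"
proof -
  let ?w = "x - y"
  have w: "?w \<in> rs A" using assms by (simp add: subspace_diff rs_subspace)
  have "transpose A *v (A *v ?w) = 0" using assms(3) by (simp add: matrix_vector_mult_diff_distrib)
  then have "norm (A *v ?w) ^ 2 = 0" using normsq_A[of ?w A] by simp
  then have Aw: "A *v ?w = 0" by simp
  from w obtain z where z: "?w = transpose A *v z" unfolding rs_def by auto
  have "?w \<bullet> ?w = (A *v ?w) \<bullet> z" by (subst (2) z) (simp add: inner_transpose)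
  then have "?w \<bullet> ?w = 0" using Aw by simp
  then show ?thesis by simp
qed

lemma rs_exists: fixes A :: "real^'n^'m"
  shows "\<exists>x \<in> rs A. transpose A *v (A *v x) = transpose A *v y"
proof -
  let ?f = "\<lambda>x. transpose A *v (A *v x)"
  have lin: "linear ?f" by (simp add: matrix_vector_mul_assoc)
  have sub: "?f ` rs A \<subseteq> rs A" unfolding rs_def by auto
  have inj: "inj_on ?f (span (rs A))" proof -
    have sp: "span (rs A) = rs A" by (simp add: rs_subspace)
    show ?thesis unfolding sp using rs_unique[of _ A] by (simp add: inj_on_def)
  qed
  have "dim (?f ` rs A) = dim (rs A)" using dim_image_eq[OF lin inj] .
  then have "?f ` rs A = rs A"
    using subspace_dim_equal[OF linear_subspace_image[OF lin rs_subspace] rs_subspace sub] by simp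
  moreover have "transpose A *v y \<in> rs A" unfolding rs_def by auto
  ultimately show ?thesis by force
qed

definition sol :: "real^'n^'m \<Rightarrow> real^'m \<Rightarrow> real^'n" where
  "sol A y = (THE x. x \<in> rs A \<and> transpose A *v (A *v x) = transpose A *v y)"

lemma sol: fixes A :: "real^'n^'m"
  shows "sol A y \<in> rs A \<and> transpose A *v (A *v sol A y) = transpose A *v y"
proof -
  have "\<exists>!x. x \<in> rs A \<and> transpose A *v (A *v x) = transpose A *v y"
    using rs_exists[of A y] rs_unique[of _ A] by metis
  then show ?thesis unfolding sol_def by (rule theI')
qed

lemma sol_unique: fixes A :: "real^'n^'m"
  assumes "x \<in> rs A" "transpose A *v (A *v x) = transpose A *v y"
  shows "sol A y = x"
  using rs_unique[of "sol A y" A x] sol[of A y] assms by simp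

lemma kerA: fixes A :: "real^'n^'m"
  assumes "transpose A *v (A *v w) = 0" shows "A *v w = 0"
  using normsq_A[of w A] assms by simp

lemma sol_linear: fixes A :: "real^'n^'m" shows "linear (sol A)"
proof
  fix x y show "sol A (x + y) = sol A x + sol A y"
    apply (rule sol_unique)
    using sol[of A x] sol[of A y] rs_subspace[of A]
    by (auto simp: subspace_add matrix_vector_right_distrib)
next
  fix c :: real and x show "sol A (c *\<^sub>R x) = c *\<^sub>R sol A x"
    apply (rule sol_unique)
    using sol[of A x] rs_subspace[of A]
    by (auto simp: subspace_scale matrix_vector_mult_scaleR)
qed

lemma perp_range: fixes A :: "real^'n^'m"
  assumes "transpose A *v v = 0" shows "v \<bullet> (A *v w) = 0"
  using inner_transpose[of w A v] assms by (simp add: inner_commute)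

lemma perp_rs: fixes A :: "real^'n^'m"
  assumes "A *v v = 0" "p \<in> rs A" shows "v \<bullet> p = 0"
proof -
  obtain z where "p = transpose A *v z" using assms(2) unfolding rs_def by auto
  then show ?thesis using inner_transpose[of v A z] assms(1) by simp
qed

lemma sym_matrix: fixes M :: "real^'n^'n"
  assumes "\<And>x y. x \<bullet> (M *v y) = y \<bullet> (M *v x)" shows "transpose M = M"
proof -
  have "\<And>y. transpose M *v y = M *v y"
  proof -
    fix y
    have "\<forall>x. x \<bullet> (transpose M *v y) = x \<bullet> (M *v y)"
    proof
      fix x
      have "x \<bullet> (transpose M *v y) = (M *v x) \<bullet> y" by (rule inner_transpose)
      also have "\<dots> = y \<bullet> (M *v x)" by (rule inner_commute)
      also have "\<dots> = x \<bullet> (M *v y)" by (rule assms[of y x])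
      finally show "x \<bullet> (transpose M *v y) = x \<bullet> (M *v y)" .
    qed
    then show "transpose M *v y = M *v y" by (simp add: vector_eq_ldot)
  qed
  then show ?thesis by (simp add: matrix_eq)
qed

lemma penrose_sol: fixes A :: "real^'n^'m"
  shows "penrose A (matrix (sol A))"
proof -
  let ?X = "matrix (sol A)"
  have X: "\<And>y. ?X *v y = sol A y" using sol_linear[of A] by simp
  have c1: "A ** ?X ** A = A"
  proof (subst matrix_eq, intro allI)
    fix x
    have "transpose A *v (A *v (sol A (A *v x) - x)) = 0"
      using sol[of A "A *v x"] by (simp add: matrix_vector_mult_diff_distrib)
    then have "A *v (sol A (A *v x) - x) = 0" by (rule kerA)
    then show "(A ** ?X ** A) *v x = A *v x"
      by (simp add: matrix_vector_mul_assoc[symmetric] X matrix_vector_mult_diff_distrib)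
  qed
  have c2: "?X ** A ** ?X = ?X"
  proof (subst matrix_eq, intro allI)
    fix y
    have s1: "sol A y \<in> rs A" using sol[of A y] by blast
    have "sol A (A *v sol A y) = sol A y" using s1 by (rule sol_unique) (rule refl)
    then show "(?X ** A ** ?X) *v y = ?X *v y"
      by (simp add: matrix_vector_mul_assoc[symmetric] X)
  qed
  have c3: "transpose (A ** ?X) = A ** ?X"
  proof (rule sym_matrix)
    fix x y
    let ?p = "sol A y" and ?q = "sol A x"
    have hp: "transpose A *v (A *v ?p - y) = 0" using sol[of A y] by (simp add: matrix_vector_mult_diff_distrib)
    have hq: "transpose A *v (A *v ?q - x) = 0" using sol[of A x] by (simp add: matrix_vector_mult_diff_distrib)
    have "x \<bullet> (A *v ?p) = (x - A *v ?q) \<bullet> (A *v ?p) + (A *v ?q) \<bullet> (A *v ?p)" by (simp add: inner_diff_left)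
    also have "\<dots> = (A *v ?q) \<bullet> (A *v ?p)" proof -
      have "(A *v ?q - x) \<bullet> (A *v ?p) = 0" by (rule perp_range[OF hq])
      then have "(x - A *v ?q) \<bullet> (A *v ?p) = 0" by (simp add: inner_diff_left)
      then show ?thesis by simp
    qed
    finally have e1: "x \<bullet> (A *v ?p) = (A *v ?q) \<bullet> (A *v ?p)" .
    have "y \<bullet> (A *v ?q) = (y - A *v ?p) \<bullet> (A *v ?q) + (A *v ?p) \<bullet> (A *v ?q)" by (simp add: inner_diff_left)
    also have "\<dots> = (A *v ?p) \<bullet> (A *v ?q)" proof -
      have "(A *v ?p - y) \<bullet> (A *v ?q) = 0" by (rule perp_range[OF hp])
      then have "(y - A *v ?p) \<bullet> (A *v ?q) = 0" by (simp add: inner_diff_left)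
      then show ?thesis by simp
    qed
    finally have e2: "y \<bullet> (A *v ?q) = (A *v ?p) \<bullet> (A *v ?q)" .
    have m1: "(A ** ?X) *v y = A *v ?p" "(A ** ?X) *v x = A *v ?q"
      by (simp_all add: matrix_vector_mul_assoc[symmetric] X)
    show "x \<bullet> ((A ** ?X) *v y) = y \<bullet> ((A ** ?X) *v x)"
      unfolding m1 e1 e2 by (rule inner_commute)
  qed
  have c4: "transpose (?X ** A) = ?X ** A"
  proof (rule sym_matrix)
    fix x y
    let ?p = "sol A (A *v y)" and ?q = "sol A (A *v x)"
    have hp: "A *v (?p - y) = 0"
      by (rule kerA) (use sol[of A "A *v y"] in \<open>simp add: matrix_vector_mult_diff_distrib\<close>)
    have hq: "A *v (?q - x) = 0"
      by (rule kerA) (use sol[of A "A *v x"] in \<open>simp add: matrix_vector_mult_diff_distrib\<close>)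
    have "x \<bullet> ?p = (x - ?q) \<bullet> ?p + ?q \<bullet> ?p" by (simp add: inner_diff_left)
    also have "\<dots> = ?q \<bullet> ?p" proof -
      have "(?q - x) \<bullet> ?p = 0" using perp_rs[of A "?q - x" ?p] hq sol[of A "A *v y"] by blast
      then have "(x - ?q) \<bullet> ?p = 0" by (simp add: inner_diff_left)
      then show ?thesis by simp
    qed
    finally have e1: "x \<bullet> ?p = ?q \<bullet> ?p" .
    have "y \<bullet> ?q = (y - ?p) \<bullet> ?q + ?p \<bullet> ?q" by (simp add: inner_diff_left)
    also have "\<dots> = ?p \<bullet> ?q" proof -
      have "(?p - y) \<bullet> ?q = 0" using perp_rs[of A "?p - y" ?q] hp sol[of A "A *v x"] by blast
      then have "(y - ?p) \<bullet> ?q = 0" by (simp add: inner_diff_left)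
      then show ?thesis by simp
    qed
    finally have e2: "y \<bullet> ?q = ?p \<bullet> ?q" .
    have m1: "(?X ** A) *v y = ?p" "(?X ** A) *v x = ?q"
      by (simp_all add: matrix_vector_mul_assoc[symmetric] X)
    show "x \<bullet> ((?X ** A) *v y) = y \<bullet> ((?X ** A) *v x)"
      unfolding m1 e1 e2 by (rule inner_commute)
  qed
  show ?thesis unfolding penrose_def using c1 c2 c3 c4 by simp
qed

lemma penrose_char: fixes A :: "real^'n^'m"
  assumes "penrose A X" shows "X *v y = sol A y"
proof -
  have p: "A ** X ** A = A" "X ** A ** X = X" "transpose (A ** X) = A ** X" "transpose (X ** A) = X ** A"
    using assms unfolding penrose_def by auto
  have "X = transpose (X ** A) ** X" using p(2,4) by simp
  also have "\<dots> = transpose A ** (transpose X ** X)" by (simp add: matrix_transpose_mul matrix_mul_assoc)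
  finally have "X *v y = transpose A *v ((transpose X ** X) *v y)" by (metis matrix_vector_mul_assoc)
  then have inrs: "X *v y \<in> rs A" unfolding rs_def by auto
  have "transpose A ** A ** X = transpose A ** transpose (A ** X)" using p(3) by (simp add: matrix_mul_assoc)
  also have "\<dots> = transpose (A ** X ** A)" by (simp add: matrix_transpose_mul matrix_mul_assoc)
  also have "\<dots> = transpose A" using p(1) by simp
  finally have "transpose A *v (A *v (X *v y)) = transpose A *v y" by (metis matrix_vector_mul_assoc)
  then show ?thesis using sol_unique[OF inrs] by simp
qed

lemma pinv_sol: fixes A :: "real^'n^'m" shows "pinv A *v y = sol A y"
proof -
  have "\<exists>!X. penrose A X"
  proof (rule ex1I[of _ "matrix (sol A)"])
    show "penrose A (matrix (sol A))" by (rule penrose_sol)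
  next
    fix X assume "penrose A X"
    then show "X = matrix (sol A)"
      using penrose_char[of A X] penrose_char[OF penrose_sol[of A]] by (simp add: matrix_eq)
  qed
  then have "penrose A (pinv A)" unfolding pinv_def by (rule theI')
  then show ?thesis by (rule penrose_char)
qed


lemma symS: fixes A :: "real^'n^'m"
  shows "x \<bullet> ((transpose A ** A) *v y) = ((transpose A ** A) *v x) \<bullet> y"
  by (simp add: matrix_vector_mul_assoc[symmetric] inner_transpose inner_commute)

lemma normsqS: fixes A :: "real^'n^'m"
  shows "x \<bullet> ((transpose A ** A) *v x) = norm (A *v x) ^ 2"
  by (simp add: matrix_vector_mul_assoc[symmetric] inner_transpose power2_norm_eq_inner)

lemma min_exists: fixes A :: "real^'n^'m"
  shows "\<exists>v. norm v = 1 \<and> (\<forall>w. norm w = 1 \<longrightarrow> norm (A *v v) ^ 2 \<le> norm (A *v w) ^ 2)"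
proof -
  have ne: "sphere (0::real^'n) 1 \<noteq> {}"
    by simp
  have "continuous_on (sphere 0 1) (\<lambda>x. norm (A *v x) ^ 2)"
    by (intro continuous_intros)
  from continuous_attains_inf[OF compact_sphere ne this] show ?thesis
    by (auto simp: sphere_def dist_norm)
qed

lemma norm_expand: fixes a b :: "'a::real_inner"
  shows "norm (a + t *\<^sub>R b) ^ 2 = norm a ^ 2 + 2 * t * (a \<bullet> b) + t^2 * norm b ^ 2"
  unfolding power2_norm_eq_inner by (simp add: inner_add_left inner_add_right inner_commute algebra_simps power2_eq_square)

lemma min_bound: fixes A :: "real^'n^'m"
  assumes v: "norm v = 1" "\<forall>w. norm w = 1 \<longrightarrow> norm (A *v v) ^ 2 \<le> norm (A *v w) ^ 2"
  shows "norm (A *v v) ^ 2 * norm x ^ 2 \<le> norm (A *v x) ^ 2"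
proof (cases "x = 0")
  case True then show ?thesis by simp
next
  case False
  let ?w = "(1 / norm x) *\<^sub>R x"
  have "norm ?w = 1" using False by simp
  then have "norm (A *v v) ^ 2 \<le> norm (A *v ?w) ^ 2" using v by blast
  also have "\<dots> = norm (A *v x) ^ 2 / norm x ^ 2"
    by (simp add: matrix_vector_mult_scaleR power_divide)
  finally show ?thesis using False by (simp add: field_simps)
qed

lemma min_eig: fixes A :: "real^'n^'m"
  assumes v: "norm v = 1" "\<forall>w. norm w = 1 \<longrightarrow> norm (A *v v) ^ 2 \<le> norm (A *v w) ^ 2"
  shows "(transpose A ** A) *v v = norm (A *v v) ^ 2 *\<^sub>R v"
proof -
  let ?S = "transpose A ** A" and ?mu = "norm (A *v v) ^ 2"
  define Q where "Q x = norm (A *v x) ^ 2 - ?mu * norm x ^ 2" for x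
  have Qge: "Q x \<ge> 0" for x using min_bound[OF v, of x] by (simp add: Q_def)
  have Qv: "Q v = 0" using v by (simp add: Q_def)
  define d where "d = ?S *v v - ?mu *\<^sub>R v"
  have exp: "Q (v + t *\<^sub>R d) = Q v + 2 * t * (d \<bullet> d) + t^2 * Q d" for t
  proof -
    have "norm (A *v (v + t *\<^sub>R d)) ^ 2 = norm (A *v v) ^ 2 + 2 * t * ((A *v v) \<bullet> (A *v d)) + t^2 * norm (A *v d) ^ 2"
      by (simp add: matrix_vector_right_distrib matrix_vector_mult_scaleR norm_expand)
    moreover have "norm (v + t *\<^sub>R d) ^ 2 = norm v ^ 2 + 2 * t * (v \<bullet> d) + t^2 * norm d ^ 2"
      by (rule norm_expand)
    moreover have "(A *v v) \<bullet> (A *v d) - ?mu * (v \<bullet> d) = d \<bullet> d"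
    proof -
      have "(A *v v) \<bullet> (A *v d) = d \<bullet> (?S *v v)"
        by (simp add: matrix_vector_mul_assoc[symmetric] inner_transpose inner_commute)
      moreover have "d \<bullet> d = d \<bullet> (?S *v v) - d \<bullet> (?mu *\<^sub>R v)"
        by (metis d_def inner_diff_right)
      moreover have "d \<bullet> (?mu *\<^sub>R v) = ?mu * (v \<bullet> d)" by (simp add: inner_commute)
      ultimately show ?thesis by linarith
    qed
    ultimately show ?thesis unfolding Q_def by (simp add: algebra_simps)
  qed
  have "d \<bullet> d = 0"
  proof (cases "Q d \<le> 0")
    case True
    have "0 \<le> Q (v + (-1) *\<^sub>R d)" by (rule Qge)
    then have "0 \<le> - 2 * (d \<bullet> d) + Q d" using exp[of "-1"] Qv by simp
    moreover have "d \<bullet> d \<ge> 0" by simp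
    ultimately show ?thesis using True by linarith
  next
    case False
    let ?t = "- (d \<bullet> d) / Q d"
    have "0 \<le> Q (v + ?t *\<^sub>R d)" by (rule Qge)
    then have h: "0 \<le> 2 * ?t * (d \<bullet> d) + ?t^2 * Q d" using exp[of ?t] Qv by simp
    have "2 * ?t * (d \<bullet> d) + ?t^2 * Q d = - (((d \<bullet> d) ^ 2) / Q d)"
      using False by (simp add: field_simps power2_eq_square)
    with h have "((d \<bullet> d) ^ 2) / Q d \<le> 0" by simp
    then have "(d \<bullet> d) ^ 2 \<le> 0" using False by (simp add: divide_le_0_iff)
    then show ?thesis by simp
  qed
  then have "d = 0" by simp
  then show ?thesis unfolding d_def by (rule eq_iff_diff_eq_0[THEN iffD2])
qed

definition evec where "evec M c = (SOME v. v \<noteq> 0 \<and> M *v v = c *\<^sub>R v)"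

lemma eig_finite: fixes A :: "real^'n^'m"
  shows "finite (eigenvalues (transpose A ** A))"
proof -
  let ?S = "transpose A ** A"
  let ?E = "eigenvalues ?S"
  have ev: "evec ?S c \<noteq> 0 \<and> ?S *v evec ?S c = c *\<^sub>R evec ?S c" if "c \<in> ?E" for c
  proof -
    have "\<exists>v. v \<noteq> 0 \<and> ?S *v v = c *\<^sub>R v" using that by (simp add: eigenvalues_def)
    then show ?thesis unfolding evec_def by (rule someI_ex[where P="\<lambda>v. v \<noteq> 0 \<and> ?S *v v = c *\<^sub>R v"])
  qed
  have inj: "inj_on (evec ?S) ?E"
  proof (rule inj_onI)
    fix c d assume c: "c \<in> ?E" and d: "d \<in> ?E" and eq: "evec ?S c = evec ?S d"
    have u1: "?S *v evec ?S c = c *\<^sub>R evec ?S c" using ev[OF c] by blast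
    have u2: "?S *v evec ?S c = d *\<^sub>R evec ?S c" unfolding eq using ev[OF d] by blast
    have "c *\<^sub>R evec ?S c = d *\<^sub>R evec ?S c" using u1 u2 by (rule trans[OF sym])
    moreover have "evec ?S c \<noteq> 0" using ev[OF c] by blast
    ultimately show "c = d" by (simp add: scaleR_cancel_right)
  qed
  have "pairwise orthogonal (evec ?S ` ?E)"
  proof (rule pairwiseI, clarify)
    fix c d assume c: "c \<in> ?E" and d: "d \<in> ?E" and ne: "evec ?S c \<noteq> evec ?S d"
    let ?u = "evec ?S c" and ?w = "evec ?S d"
    have cd: "c \<noteq> d" using ne by auto
    have "c * (?u \<bullet> ?w) = (?S *v ?u) \<bullet> ?w" using ev[OF c] by simp
    also have "\<dots> = ?u \<bullet> (?S *v ?w)" by (rule symS[symmetric])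
    also have "\<dots> = d * (?u \<bullet> ?w)" using ev[OF d] by simp
    finally have "(c - d) * (?u \<bullet> ?w) = 0" by (simp add: algebra_simps)
    then show "orthogonal ?u ?w" using cd by (simp add: orthogonal_def)
  qed
  moreover have "0 \<notin> evec ?S ` ?E" using ev by auto
  ultimately have "independent (evec ?S ` ?E)" by (rule pairwise_orthogonal_independent)
  then have "finite (evec ?S ` ?E)" using independent_bound by blast
  then show ?thesis using inj by (rule finite_imageD)
qed

lemma smallest_eig: fixes A :: "real^'n^'m"
  assumes inj: "inj ((*v) A)"
  shows "smallest_eigenvalue (transpose A ** A) > 0 \<and>
    (\<forall>x. smallest_eigenvalue (transpose A ** A) * norm x ^ 2 \<le> norm (A *v x) ^ 2)"
proof -
  let ?S = "transpose A ** A"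
  let ?E = "eigenvalues ?S"
  obtain v where v: "norm v = 1" "\<forall>w. norm w = 1 \<longrightarrow> norm (A *v v) ^ 2 \<le> norm (A *v w) ^ 2"
    using min_exists[of A] by blast
  let ?mu = "norm (A *v v) ^ 2"
  have v0: "v \<noteq> 0" using v(1) by auto
  have muE: "?mu \<in> ?E" unfolding eigenvalues_def mem_Collect_eq by (rule exI[of _ v], rule conjI[OF v0 min_eig[OF v]])
  have pos: "c > 0" if "c \<in> ?E" for c
  proof -
    have "\<exists>w. w \<noteq> 0 \<and> ?S *v w = c *\<^sub>R w" using that unfolding eigenvalues_def mem_Collect_eq .
    then obtain w where ww: "w \<noteq> 0 \<and> ?S *v w = c *\<^sub>R w" by (rule exE)
    have w: "w \<noteq> 0" "?S *v w = c *\<^sub>R w" using ww by (rule conjunct1, rule conjunct2)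
    have "norm (A *v w) ^ 2 = w \<bullet> (?S *v w)" by (rule normsqS[symmetric])
    also have "\<dots> = c * (w \<bullet> w)" unfolding w(2) by (rule inner_scaleR_right)
    finally have e: "norm (A *v w) ^ 2 = c * (w \<bullet> w)" .
    have "A *v w \<noteq> 0"
    proof
      assume "A *v w = 0"
      then have "A *v w = A *v 0" by simp
      then have "w = 0" by (rule injD[OF inj])
      then show False using w(1) by blast
    qed
    then have "norm (A *v w) ^ 2 > 0" by simp
    moreover have "w \<bullet> w > 0" using w(1) by simp
    ultimately have "0 < c * (w \<bullet> w)" using e by simp
    then show ?thesis using \<open>w \<bullet> w > 0\<close> by (rule zero_less_mult_pos2)
  qed
  have fin: "finite ?E" by (rule eig_finite)
  have ne: "?E \<noteq> {}" using muE by blast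
  have "smallest_eigenvalue ?S \<in> ?E" unfolding smallest_eigenvalue_def by (rule Min_in[OF fin ne])
  then have p: "smallest_eigenvalue ?S > 0" by (rule pos)
  have le: "smallest_eigenvalue ?S \<le> ?mu" unfolding smallest_eigenvalue_def by (rule Min_le[OF fin muE])
  have "smallest_eigenvalue ?S * norm x ^ 2 \<le> norm (A *v x) ^ 2" for x
  proof -
    have "smallest_eigenvalue ?S * norm x ^ 2 \<le> ?mu * norm x ^ 2"
      using le by (rule mult_right_mono) simp
    then show ?thesis using min_bound[OF v, of x] by linarith
  qed
  with p show ?thesis by blast
qed


theorem corollary1:
  fixes A :: "real^'n^'m" and b bt :: "real^'m" and L :: "real^'n^'p" and g :: "real^'p"
    and \<gamma> :: real and ut :: "real^'n"
  assumes "\<gamma> > 0"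
    and "L *v (pinv A *v b) = g"
    and "((mat 1 + \<gamma> *\<^sub>R (transpose A ** A)) ** (transpose A ** A) + \<gamma> *\<^sub>R (transpose L ** L)) *v ut
         = (mat 1 + \<gamma> *\<^sub>R (transpose A ** A)) *v (transpose A *v bt) + \<gamma> *\<^sub>R (transpose L *v g)"
    and "\<exists>!u. ((mat 1 + \<gamma> *\<^sub>R (transpose A ** A)) ** (transpose A ** A) + \<gamma> *\<^sub>R (transpose L ** L)) *v u
         = (mat 1 + \<gamma> *\<^sub>R (transpose A ** A)) *v (transpose A *v b) + \<gamma> *\<^sub>R (transpose L *v g)"
  shows "norm (A *v (pinv A *v b) - A *v ut) \<le> norm ((mat 1 + \<gamma> *\<^sub>R (A ** transpose A)) *v (b - bt))
     \<and> ((CARD('n) \<le> CARD('m) \<and> rank A = CARD('n)) \<longrightarrow>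
        norm (pinv A *v b - ut) \<le>
          (1 / sqrt (smallest_eigenvalue (transpose A ** A)))
            * norm ((mat 1 + \<gamma> *\<^sub>R (A ** transpose A)) *v (b - bt)))"
proof -
  let ?S = "transpose A ** A"
  let ?T = "\<lambda>x. transpose A *v (A *v x)"
  let ?P = "\<lambda>y. transpose A *v y"
  let ?LL = "\<lambda>x. transpose L *v (L *v x)"
  define u where "u = pinv A *v b"
  define e where "e = u - ut"
  define r where "r = (mat 1 + \<gamma> *\<^sub>R (A ** transpose A)) *v (b - bt)"
  have Su: "?T u = ?P b" using sol[of A b] by (simp add: u_def pinv_sol)
  have Lu: "L *v u = g" using assms(2) by (simp add: u_def)
  have Mexp: "((mat 1 + \<gamma> *\<^sub>R ?S) ** ?S + \<gamma> *\<^sub>R (transpose L ** L)) *v x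
      = ?T x + \<gamma> *\<^sub>R ?T (?T x) + \<gamma> *\<^sub>R ?LL x" for x
    by (simp add: matrix_vector_mul_assoc[symmetric] matrix_vector_mult_add_rdistrib
        scaleR_matrix_vector_assoc[symmetric])
  have Rexp: "(mat 1 + \<gamma> *\<^sub>R ?S) *v (?P y) + \<gamma> *\<^sub>R (transpose L *v g)
      = ?P y + \<gamma> *\<^sub>R ?T (?P y) + \<gamma> *\<^sub>R (transpose L *v g)" for y
    by (simp add: matrix_vector_mul_assoc[symmetric] matrix_vector_mult_add_rdistrib
        scaleR_matrix_vector_assoc[symmetric])
  have rexp: "r = (b - bt) + \<gamma> *\<^sub>R (A *v ?P (b - bt))"
    by (simp add: r_def matrix_vector_mul_assoc[symmetric] matrix_vector_mult_add_rdistrib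
        scaleR_matrix_vector_assoc[symmetric])
  have h3: "?T ut + \<gamma> *\<^sub>R ?T (?T ut) + \<gamma> *\<^sub>R ?LL ut
      = ?P bt + \<gamma> *\<^sub>R ?T (?P bt) + \<gamma> *\<^sub>R (transpose L *v g)"
    using assms(3) unfolding Mexp Rexp .
  have "?T e + \<gamma> *\<^sub>R ?T (?T e) + \<gamma> *\<^sub>R ?LL e
      = (?P b + \<gamma> *\<^sub>R ?T (?P b) + \<gamma> *\<^sub>R (transpose L *v g))
        - (?T ut + \<gamma> *\<^sub>R ?T (?T ut) + \<gamma> *\<^sub>R ?LL ut)"
  proof -
    have t1: "?T e = ?P b - ?T ut" unfolding e_def Su[symmetric] by (simp add: matrix_vector_mult_diff_distrib)
    have t2: "?T (?T e) = ?T (?P b) - ?T (?T ut)" unfolding t1 by (simp add: matrix_vector_mult_diff_distrib)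
    have t3: "?LL e = transpose L *v g - ?LL ut" unfolding e_def Lu[symmetric] by (simp add: matrix_vector_mult_diff_distrib)
    show ?thesis unfolding t1 t2 t3 by (simp add: algebra_simps)
  qed
  also have "\<dots> = (?P b + \<gamma> *\<^sub>R ?T (?P b) + \<gamma> *\<^sub>R (transpose L *v g))
        - (?P bt + \<gamma> *\<^sub>R ?T (?P bt) + \<gamma> *\<^sub>R (transpose L *v g))" unfolding h3 ..
  also have "\<dots> = ?P r"
    unfolding rexp by (simp add: matrix_vector_mult_diff_distrib matrix_vector_right_distrib
        matrix_vector_mult_scaleR algebra_simps)
  finally have key: "?T e + \<gamma> *\<^sub>R ?T (?T e) + \<gamma> *\<^sub>R ?LL e = ?P r" .
  have i1: "e \<bullet> ?T e = norm (A *v e) ^ 2" by (rule normsq_A)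
  have i2: "e \<bullet> ?T (?T e) = (?T e) \<bullet> (?T e)"
    by (simp add: inner_transpose inner_commute)
  have i3: "e \<bullet> ?LL e = (L *v e) \<bullet> (L *v e)" by (simp add: inner_transpose)
  have i4: "e \<bullet> ?P r = (A *v e) \<bullet> r" by (rule inner_transpose)
  have "e \<bullet> (?T e + \<gamma> *\<^sub>R ?T (?T e) + \<gamma> *\<^sub>R ?LL e)
      = norm (A *v e) ^ 2 + \<gamma> * ((?T e) \<bullet> (?T e)) + \<gamma> * ((L *v e) \<bullet> (L *v e))"
    by (simp add: inner_add_right i1 i2 i3)
  then have "(A *v e) \<bullet> r = norm (A *v e) ^ 2 + \<gamma> * ((?T e) \<bullet> (?T e)) + \<gamma> * ((L *v e) \<bullet> (L *v e))"
    unfolding key i4 .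
  moreover have "\<gamma> * ((?T e) \<bullet> (?T e)) \<ge> 0" "\<gamma> * ((L *v e) \<bullet> (L *v e)) \<ge> 0"
    using assms(1) by simp_all
  ultimately have "norm (A *v e) ^ 2 \<le> (A *v e) \<bullet> r" by linarith
  also have "\<dots> \<le> norm (A *v e) * norm r" by (rule norm_cauchy_schwarz)
  finally have cs: "norm (A *v e) * norm (A *v e) \<le> norm (A *v e) * norm r" by (simp add: power2_eq_square)
  have part1: "norm (A *v e) \<le> norm r"
  proof (cases "norm (A *v e) = 0")
    case True then show ?thesis by simp
  next
    case False
    then have "norm (A *v e) > 0" by simp
    with cs show ?thesis by simp
  qed
  have eq1: "A *v (pinv A *v b) - A *v ut = A *v e"
    by (simp add: e_def u_def matrix_vector_mult_diff_distrib)
  have part2: "norm e \<le> (1 / sqrt (smallest_eigenvalue ?S)) * norm r"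
    if rk: "rank A = CARD('n)"
  proof -
    have inj: "inj ((*v) A)" using rk full_rank_injective by blast
    let ?l = "smallest_eigenvalue ?S"
    have lp: "?l > 0" and lb: "?l * norm e ^ 2 \<le> norm (A *v e) ^ 2"
      using smallest_eig[OF inj] by blast+
    have "(sqrt ?l * norm e) ^ 2 = ?l * norm e ^ 2" using lp by (simp add: power_mult_distrib)
    also have "\<dots> \<le> norm (A *v e) ^ 2" by (rule lb)
    also have "\<dots> \<le> norm r ^ 2" using part1 by (simp add: power_mono)
    finally have "sqrt ?l * norm e \<le> norm r" by (rule power2_le_imp_le) simp
    then show ?thesis using lp by (simp add: field_simps)
  qed
  show ?thesis
    unfolding eq1 r_def[symmetric] using part1 part2 by (simp add: e_def u_def)
qed

end
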